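(* Let $f=\min\{0,X,Y,X+Y\}$. Then for all $N\ge2$, $$N+1\le\dim(W_N)\le 4N,$$ where $W_N$ is the set associated with $\mathrm{rad}(f)$ as in the context.
   Context: A tropical (Laurent) polynomial in $2$ variables is $g=\min_{1\le j\le l}\{h_j+b_{j,1}X+b_{j,2}Y\}$ with $h_j\in\mathbb{R}$ and pairwise distinct $(b_{j,1},b_{j,2})\in\mathbb{Z}^2$. A point $x\in\mathbb{R}^2$ is a tropical solution of $g$ if the minimum is attained at least twice. $V(f)$ is the set of tropical solutions of $f$ and $\mathrm{rad}(f)$ is the set of all tropical polynomials vanishing at every point of $V(f)$. Let $T_N=\{0,\dots,N-1\}^2$ and identify $\mathbb{R}^{T_N}\cong\mathbb{R}^{N^2}$ with coordinates $w(k)$, $k\in T_N$. For $g$ with all exponents in $T_N$, its linearization is $\min_j\{h_j+w(b_{j,1},b_{j,2})\}$, satisfied by $w$ if the minimum is attained at least twice. $W_N$ is the set of all $w\in\mathbb{R}^{N^2}$ satisfying the linearizations of all $g\in\mathrm{rad}(f)$ with exponents in $T_N$. $\dim(W_N)$ is the minimum of the dimensions of tropical linear prevarieties (finite unions of convex polyhedra in $\mathbb{R}^{N^2}$) containing $W_N$. *)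

theory Defs
  imports Complex_Main
begin

text \<open>A tropical polynomial min_j (h_j + b_j1 X + b_j2 Y) with pairwise distinct exponent
  vectors is represented as a finite, nonempty partial map from exponents (in Z^2) to
  coefficients h_j.\<close>

type_synonym tpoly = "int \<times> int \<Rightarrow> real option"

definition is_tpoly :: "tpoly \<Rightarrow> bool" where
  "is_tpoly g \<longleftrightarrow> finite (dom g) \<and> dom g \<noteq> {}"

definition term_val :: "tpoly \<Rightarrow> int \<times> int \<Rightarrow> real \<times> real \<Rightarrow> real" where
  "term_val g b x = the (g b) + real_of_int (fst b) * fst x + real_of_int (snd b) * snd x"

definition trop_sol :: "tpoly \<Rightarrow> real \<times> real \<Rightarrow> bool" where
  "trop_sol g x \<longleftrightarrow> (\<exists>b\<in>dom g. \<exists>c\<in>dom g. b \<noteq> c \<and> term_val g b x = term_val g c x \<and>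
       (\<forall>d\<in>dom g. term_val g b x \<le> term_val g d x))"

definition V :: "tpoly \<Rightarrow> (real \<times> real) set" where
  "V g = {x. trop_sol g x}"

definition rad :: "tpoly \<Rightarrow> tpoly set" where
  "rad f = {g. is_tpoly g \<and> V f \<subseteq> V g}"

definition T :: "nat \<Rightarrow> (int \<times> int) set" where
  "T N = {0..<int N} \<times> {0..<int N}"

text \<open>R^{T_N} is represented by functions int \<times> int \<Rightarrow> real vanishing outside T_N.\<close>
definition RT :: "nat \<Rightarrow> (int \<times> int \<Rightarrow> real) set" where
  "RT N = {w. \<forall>k. k \<notin> T N \<longrightarrow> w k = 0}"

definition lin_sat :: "tpoly \<Rightarrow> (int \<times> int \<Rightarrow> real) \<Rightarrow> bool" where
  "lin_sat g w \<longleftrightarrow> (\<exists>b\<in>dom g. \<exists>c\<in>dom g. b \<noteq> c \<and> the (g b) + w b = the (g c) + w c \<and>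
       (\<forall>d\<in>dom g. the (g b) + w b \<le> the (g d) + w d))"

definition W :: "tpoly \<Rightarrow> nat \<Rightarrow> (int \<times> int \<Rightarrow> real) set" where
  "W f N = {w \<in> RT N. \<forall>g \<in> rad f. dom g \<subseteq> T N \<longrightarrow> lin_sat g w}"

definition trop_lin_prevariety :: "nat \<Rightarrow> (int \<times> int \<Rightarrow> real) set \<Rightarrow> bool" where
  "trop_lin_prevariety N P \<longleftrightarrow> (\<exists>G. finite G \<and> (\<forall>g\<in>G. is_tpoly g \<and> dom g \<subseteq> T N) \<and>
       P = {w \<in> RT N. \<forall>g\<in>G. lin_sat g w})"

definition polyhedronT :: "nat \<Rightarrow> (int \<times> int \<Rightarrow> real) set \<Rightarrow> bool" where
  "polyhedronT N C \<longleftrightarrow> (\<exists>F. finite F \<and>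
       C = {w \<in> RT N. \<forall>(a, c)\<in>F. (\<Sum>k\<in>T N. a k * w k) \<le> c})"

text \<open>Affine independence and affine dimension (empty set has dimension -1).\<close>
definition aff_indep :: "(int \<times> int \<Rightarrow> real) set \<Rightarrow> bool" where
  "aff_indep A \<longleftrightarrow> finite A \<and> (\<forall>u. (\<Sum>a\<in>A. u a) = 0 \<and> (\<forall>k. (\<Sum>a\<in>A. u a * a k) = 0)
       \<longrightarrow> (\<forall>a\<in>A. u a = 0))"

definition adim :: "(int \<times> int \<Rightarrow> real) set \<Rightarrow> int" where
  "adim S = int (Max {card A | A. A \<subseteq> S \<and> aff_indep A}) - 1"

text \<open>Dimension of a finite union of convex polyhedra: the least d such that the set is a
  finite union of convex polyhedra each of dimension at most d (i.e. the maximal dimension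
  of the pieces).\<close>
definition pdim :: "nat \<Rightarrow> (int \<times> int \<Rightarrow> real) set \<Rightarrow> int" where
  "pdim N P = Inf {d. \<exists>\<C>. finite \<C> \<and> \<Union>\<C> = P \<and> (\<forall>C\<in>\<C>. polyhedronT N C \<and> adim C \<le> d)}"

definition dimW :: "tpoly \<Rightarrow> nat \<Rightarrow> int" where
  "dimW f N = Inf {pdim N P | P. trop_lin_prevariety N P \<and> W f N \<subseteq> P}"

definition f0 :: tpoly where
  "f0 = [(0,0) \<mapsto> 0, (1,0) \<mapsto> 0, (0,1) \<mapsto> 0, (1,1) \<mapsto> 0]"

end

theory Submission
  imports Defs "HOL-Library.Function_Algebras" "HOL-Library.FuncSet" "HOL-Computational_Algebra.Polynomial"
begin

lemma sum_fun_apply: "(\<Sum>v\<in>t. f v) x = (\<Sum>v\<in>t. f v x)"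
  for f :: "'a \<Rightarrow> 'b \<Rightarrow> 'c::comm_monoid_add"
  by (induct t rule: infinite_finite_induct) auto

interpretation fvs: vector_space "(\<lambda>c (f::int\<times>int\<Rightarrow>real) x. c * f x)"
  by unfold_locales (auto simp: fun_eq_iff algebra_simps)

lemma aff_bound:
  fixes A :: "(int\<times>int\<Rightarrow>real) set" and E :: "'i \<Rightarrow> int\<times>int\<Rightarrow>real"
  assumes fI: "finite I" and Ep: "\<forall>i\<in>I. E i p = 0" and Ap: "\<forall>a\<in>A. a p = 0"
    and sp: "\<forall>a\<in>A. \<exists>l. \<forall>k. a k = (\<Sum>i\<in>I. l i * E i k)" and ai: "aff_indep A"
  shows "card A \<le> card I + 1"
proof -
  define aug where "aug a = a(p := 1)" for a :: "int\<times>int\<Rightarrow>real"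
  define \<delta> :: "int\<times>int\<Rightarrow>real" where "\<delta> = (\<lambda>k. if k = p then 1 else 0)"
  have finA: "finite A" using ai aff_indep_def by auto
  have augp: "aug a p = 1" for a unfolding aug_def by simp
  have augk: "k \<noteq> p \<Longrightarrow> aug a k = a k" for a k unfolding aug_def by simp
  have inj: "inj_on aug A"
  proof (rule inj_onI)
    fix a b assume ab: "a\<in>A" "b\<in>A" "aug a = aug b"
    show "a = b"
    proof
      fix k show "a k = b k"
      proof (cases "k = p")
        case True
        have "a p = 0" "b p = 0" using ab Ap by auto
        then show ?thesis using True by simp
      next
        case False then show ?thesis using ab augk[of k a] augk[of k b] by metis
      qed
    qed
  qed
  have spn: "aug ` A \<subseteq> fvs.span (insert \<delta> (E ` I))"
  proof
    fix v assume "v \<in> aug ` A"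
    then obtain a where a: "a\<in>A" "v = aug a" by auto
    obtain l where l: "\<forall>k. a k = (\<Sum>i\<in>I. l i * E i k)" using sp a(1) by blast
    have lk: "a k = (\<Sum>i\<in>I. l i * E i k)" for k using l by blast
    have veq: "v = \<delta> + (\<Sum>i\<in>I. (\<lambda>k. l i * E i k))"
    proof
      fix k
      show "v k = (\<delta> + (\<Sum>i\<in>I. (\<lambda>k. l i * E i k))) k"
        using a lk[of k] Ap Ep augp augk[of k a]
        by (cases "k = p") (auto simp: \<delta>_def sum_fun_apply)
    qed
    have "(\<Sum>i\<in>I. (\<lambda>k. l i * E i k)) \<in> fvs.span (insert \<delta> (E ` I))"
      by (intro fvs.span_sum fvs.span_scale fvs.span_base) auto
    moreover have "\<delta> \<in> fvs.span (insert \<delta> (E ` I))" by (intro fvs.span_base) auto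
    ultimately show "v \<in> fvs.span (insert \<delta> (E ` I))" unfolding veq
      by (intro fvs.span_add)
  qed
  have ind: "fvs.independent (aug ` A)"
    unfolding fvs.independent_explicit_finite_subsets
  proof (intro allI impI ballI)
    fix S u v assume S: "S \<subseteq> aug ` A" "finite S"
      and su: "(\<Sum>v\<in>S. (\<lambda>x. u v * v x)) = 0" and v: "v \<in> S"
    define S0 where "S0 = {a\<in>A. aug a \<in> S}"
    have SS0: "S = aug ` S0" using S unfolding S0_def by auto
    have injS0: "inj_on aug S0" using inj unfolding S0_def by (auto intro: inj_on_subset)
    have S0A: "S0 \<subseteq> A" unfolding S0_def by auto
    define U where "U a = (if a \<in> S0 then u (aug a) else 0)" for a
    have sk: "(\<Sum>v\<in>S. u v * v k) = 0" for k
      using fun_cong[OF su, of k] by (simp add: sum_fun_apply)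
    have e1: "(\<Sum>a\<in>A. U a) = 0"
    proof -
      have "(\<Sum>a\<in>A. U a) = (\<Sum>a\<in>S0. u (aug a))"
        unfolding U_def using S0A finA by (simp add: sum.If_cases Int_absorb1)
      also have "\<dots> = (\<Sum>v\<in>S. u v)" unfolding SS0 using injS0 by (simp add: sum.reindex)
      also have "\<dots> = (\<Sum>v\<in>S. u v * v p)"
        using SS0 augp by (intro sum.cong) auto
      finally show ?thesis using sk by simp
    qed
    have e2: "(\<Sum>a\<in>A. U a * a k) = 0" for k
    proof (cases "k = p")
      case True then show ?thesis using Ap by (simp add: sum.neutral)
    next
      case False
      have "(\<Sum>a\<in>A. U a * a k) = (\<Sum>a\<in>S0. u (aug a) * aug a k)"
        unfolding U_def by (rule sum.mono_neutral_cong_right) (use S0A finA False augk in auto)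
      also have "\<dots> = (\<Sum>v\<in>S. u v * v k)" unfolding SS0 using injS0 by (simp add: sum.reindex)
      finally show ?thesis using sk by simp
    qed
    have "\<forall>a\<in>A. U a = 0" using ai e1 e2 unfolding aff_indep_def by blast
    then show "u v = 0" using v SS0 S0A unfolding U_def by (metis (no_types, lifting) imageE subsetD)
  qed
  have "card (aug ` A) \<le> card (insert \<delta> (E ` I))"
    using fvs.independent_span_bound[OF _ ind spn] fI by auto
  also have "\<dots> \<le> card (E ` I) + 1" by (simp add: card_insert_le_m1 card_insert_if)
  also have "\<dots> \<le> card I + 1" using card_image_le[OF fI] by simp
  finally show ?thesis using card_image[OF inj] by simp
qed


lemma finite_T: "finite (T N)" unfolding T_def by simp

lemma card_T: "card (T N) = N * N"
  unfolding T_def by (simp add: card_cartesian_product)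

definition ind :: "int\<times>int \<Rightarrow> int\<times>int \<Rightarrow> real" where
  "ind b = (\<lambda>k. if k = b then 1 else 0)"

lemma sum_ind: assumes "b \<in> T N" shows "(\<Sum>k\<in>T N. ind b k * w k) = w b"
proof -
  have "(\<Sum>k\<in>T N. ind b k * w k) = (\<Sum>k\<in>T N. if b = k then w k else 0)"
    by (intro sum.cong) (auto simp: ind_def)
  also have "\<dots> = w b" using finite_T[of N] assms by (simp add: sum.delta)
  finally show ?thesis .
qed

lemma sum_ind2: "b \<in> T N \<Longrightarrow> c \<in> T N \<Longrightarrow>
   (\<Sum>k\<in>T N. (ind b k - ind c k) * w k) = w b - w c"
  by (simp add: left_diff_distrib sum_subtractf sum_ind)

lemma aff_indep_empty: "aff_indep {}" unfolding aff_indep_def by simp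

lemma adim_le:
  assumes "\<forall>A. A \<subseteq> C \<longrightarrow> aff_indep A \<longrightarrow> card A \<le> n"
  shows "adim C \<le> int n - 1"
proof -
  let ?S = "{card A | A. A \<subseteq> C \<and> aff_indep A}"
  have "?S \<subseteq> {..n}" using assms by auto
  hence fin: "finite ?S" by (rule finite_subset) simp
  have ne: "?S \<noteq> {}" using aff_indep_empty by auto
  have "Max ?S \<le> n" using fin ne assms by (subst Max_le_iff) auto
  then show ?thesis unfolding adim_def by simp
qed

lemma adim_ge:
  assumes "\<forall>A. A \<subseteq> C \<longrightarrow> aff_indep A \<longrightarrow> card A \<le> n" "B \<subseteq> C" "aff_indep B"
  shows "int (card B) - 1 \<le> adim C"
proof -
  let ?S = "{card A | A. A \<subseteq> C \<and> aff_indep A}"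
  have "?S \<subseteq> {..n}" using assms by auto
  hence fin: "finite ?S" by (rule finite_subset) simp
  have "card B \<le> Max ?S" using fin assms by (intro Max_ge) auto
  then show ?thesis unfolding adim_def by simp
qed

lemma RT_bound:
  assumes "A \<subseteq> RT N" "aff_indep A"
  shows "card A \<le> N * N + 1"
proof -
  have "card A \<le> card (T N) + 1"
  proof (rule aff_bound[where I = "T N" and E = ind and p = "(-1,-1)"])
    show "finite (T N)" by (rule finite_T)
    show "\<forall>i\<in>T N. ind i (- 1, - 1) = 0" unfolding ind_def T_def by auto
    show "\<forall>a\<in>A. a (- 1, - 1) = 0" using assms(1) unfolding RT_def T_def by auto
    show "\<forall>a\<in>A. \<exists>l. \<forall>k. a k = (\<Sum>i\<in>T N. l i * ind i k)"
    proof
      fix a assume a: "a \<in> A"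
      have "a k = (\<Sum>i\<in>T N. a i * ind i k)" for k
      proof (cases "k \<in> T N")
        case True
        have "(\<Sum>i\<in>T N. a i * ind i k) = (\<Sum>i\<in>T N. ind k i * a i)"
          by (intro sum.cong) (auto simp: ind_def)
        then show ?thesis using sum_ind[OF True] by simp
      next
        case False
        have "(\<Sum>i\<in>T N. a i * ind i k) = 0" using False by (intro sum.neutral) (auto simp: ind_def)
        moreover have "a k = 0" using False a assms(1) unfolding RT_def by blast
        ultimately show ?thesis by simp
      qed
      then show "\<exists>l. \<forall>k. a k = (\<Sum>i\<in>T N. l i * ind i k)" by blast
    qed
    show "aff_indep A" by fact
  qed
  then show ?thesis using card_T by simp
qed

definition pairs :: "tpoly \<Rightarrow> ((int\<times>int)\<times>(int\<times>int)) set" where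
  "pairs g = {(b,c). b \<in> dom g \<and> c \<in> dom g \<and> b \<noteq> c}"

definition piece :: "nat \<Rightarrow> tpoly set \<Rightarrow> (tpoly \<Rightarrow> (int\<times>int)\<times>(int\<times>int)) \<Rightarrow> (int\<times>int\<Rightarrow>real) set" where
  "piece N G \<sigma> = {w \<in> RT N. \<forall>g\<in>G.
      the (g (fst (\<sigma> g))) + w (fst (\<sigma> g)) = the (g (snd (\<sigma> g))) + w (snd (\<sigma> g)) \<and>
      (\<forall>d\<in>dom g. the (g (fst (\<sigma> g))) + w (fst (\<sigma> g)) \<le> the (g d) + w d)}"

lemma piece_poly:
  assumes "finite G" "\<forall>g\<in>G. finite (dom g) \<and> dom g \<subseteq> T N" "\<sigma> \<in> Pi G pairs"
  shows "polyhedronT N (piece N G \<sigma>)"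
proof -
  define F where "F = (\<Union>g\<in>G. (let b = fst (\<sigma> g); c = snd (\<sigma> g) in
      {(\<lambda>k. ind b k - ind c k, the (g c) - the (g b)), (\<lambda>k. ind c k - ind b k, the (g b) - the (g c))}
      \<union> (\<lambda>d. (\<lambda>k. ind b k - ind d k, the (g d) - the (g b))) ` dom g))"
  have "finite F" unfolding F_def using assms(1,2) by (auto simp: Let_def)
  moreover have "piece N G \<sigma> = {w \<in> RT N. \<forall>(a, c)\<in>F. (\<Sum>k\<in>T N. a k * w k) \<le> c}"
  proof -
    have bc: "fst (\<sigma> g) \<in> T N \<and> snd (\<sigma> g) \<in> T N" if "g \<in> G" for g
    proof -
      have "\<sigma> g \<in> pairs g" using assms(3) that by auto
      then have "fst (\<sigma> g) \<in> dom g" "snd (\<sigma> g) \<in> dom g" unfolding pairs_def by auto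
      then show ?thesis using assms(2) that by auto
    qed
    have dT: "d \<in> T N" if "g \<in> G" "d \<in> dom g" for g d using assms(2) that by auto
    show ?thesis unfolding piece_def F_def
      apply (rule Collect_cong)
      apply (auto simp: Let_def sum_ind2 bc dT)
       apply (drule bspec, assumption, clarsimp, drule bspec, erule domI, simp)
      apply (drule bspec, assumption, clarsimp, drule bspec, erule domI, simp)
      done
  qed
  ultimately show ?thesis unfolding polyhedronT_def by blast
qed


lemma decomp:
  assumes fG: "finite G" and dG: "\<forall>g\<in>G. finite (dom g) \<and> dom g \<subseteq> T N"
  shows "\<exists>\<C>. finite \<C> \<and> \<Union>\<C> = {w\<in>RT N. \<forall>g\<in>G. lin_sat g w} \<and>
     (\<forall>C\<in>\<C>. polyhedronT N C \<and> (\<forall>g\<in>G. \<exists>b\<in>dom g. \<exists>c\<in>dom g. b \<noteq> c \<and>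
        (\<forall>w\<in>C. the (g b) + w b = the (g c) + w c)))"
proof (intro exI conjI)
  let ?C = "piece N G ` (PiE G pairs)"
  have fp: "finite (pairs g)" if "g \<in> G" for g
  proof -
    have "pairs g \<subseteq> dom g \<times> dom g" unfolding pairs_def by auto
    then show ?thesis using dG that by (meson finite_SigmaI finite_subset)
  qed
  show "finite ?C" using fG fp by (intro finite_imageI finite_PiE) auto
  show "\<Union>?C = {w\<in>RT N. \<forall>g\<in>G. lin_sat g w}"
  proof (rule set_eqI iffI)+
    fix w assume "w \<in> \<Union>?C"
    then obtain \<sigma> where s: "\<sigma> \<in> PiE G pairs" "w \<in> piece N G \<sigma>" by auto
    have "lin_sat g w" if g: "g \<in> G" for g
    proof -
      have "\<sigma> g \<in> pairs g" using s g by auto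
      then obtain b c where bc: "\<sigma> g = (b,c)" "b\<in>dom g" "c\<in>dom g" "b\<noteq>c"
        unfolding pairs_def by blast
      have cnd: "the (g b) + w b = the (g c) + w c \<and> (\<forall>d\<in>dom g. the (g b) + w b \<le> the (g d) + w d)"
        using s(2) g bc(1) unfolding piece_def by force
      show ?thesis unfolding lin_sat_def using bc cnd by blast
    qed
    then show "w \<in> {w\<in>RT N. \<forall>g\<in>G. lin_sat g w}" using s(2) unfolding piece_def by auto
  next
    fix w assume w: "w \<in> {w\<in>RT N. \<forall>g\<in>G. lin_sat g w}"
    have "\<forall>g\<in>G. \<exists>bc\<in>pairs g. the (g (fst bc)) + w (fst bc) = the (g (snd bc)) + w (snd bc) \<and>
      (\<forall>d\<in>dom g. the (g (fst bc)) + w (fst bc) \<le> the (g d) + w d)"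
    proof
      fix g assume g: "g \<in> G"
      then have "lin_sat g w" using w by auto
      then obtain b c where bc: "b\<in>dom g" "c\<in>dom g" "b\<noteq>c" "the (g b) + w b = the (g c) + w c"
         "\<forall>d\<in>dom g. the (g b) + w b \<le> the (g d) + w d" unfolding lin_sat_def by blast
      show "\<exists>bc\<in>pairs g. the (g (fst bc)) + w (fst bc) = the (g (snd bc)) + w (snd bc) \<and>
      (\<forall>d\<in>dom g. the (g (fst bc)) + w (fst bc) \<le> the (g d) + w d)"
        using bc by (intro bexI[of _ "(b,c)"]) (auto simp: pairs_def)
    qed
    then obtain \<sigma>0 where s0: "\<forall>g\<in>G. \<sigma>0 g \<in> pairs g \<and>
      the (g (fst (\<sigma>0 g))) + w (fst (\<sigma>0 g)) = the (g (snd (\<sigma>0 g))) + w (snd (\<sigma>0 g)) \<and>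
      (\<forall>d\<in>dom g. the (g (fst (\<sigma>0 g))) + w (fst (\<sigma>0 g)) \<le> the (g d) + w d)"
      by (metis (no_types, lifting) bchoice)
    have "restrict \<sigma>0 G \<in> PiE G pairs" using s0 by auto
    moreover have "w \<in> piece N G (restrict \<sigma>0 G)"
    proof -
      show ?thesis unfolding piece_def
      proof (intro CollectI conjI ballI)
        show "w \<in> RT N" using w by simp
      next
        fix g assume g: "g \<in> G"
        have e: "restrict \<sigma>0 G g = \<sigma>0 g" using g by simp
        show "the (g (fst (restrict \<sigma>0 G g))) + w (fst (restrict \<sigma>0 G g)) =
          the (g (snd (restrict \<sigma>0 G g))) + w (snd (restrict \<sigma>0 G g))"
          unfolding e using s0 g by blast
      next
        fix g d assume g: "g \<in> G" and d: "d \<in> dom g"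
        have e: "restrict \<sigma>0 G g = \<sigma>0 g" using g by simp
        show "the (g (fst (restrict \<sigma>0 G g))) + w (fst (restrict \<sigma>0 G g)) \<le> the (g d) + w d"
          unfolding e using s0 g d by blast
      qed
    qed
    ultimately show "w \<in> \<Union>?C" by blast
  qed
  show "\<forall>C\<in>?C. polyhedronT N C \<and> (\<forall>g\<in>G. \<exists>b\<in>dom g. \<exists>c\<in>dom g. b \<noteq> c \<and>
        (\<forall>w\<in>C. the (g b) + w b = the (g c) + w c))"
  proof
    fix C assume "C \<in> ?C"
    then obtain \<sigma> where s: "\<sigma> \<in> PiE G pairs" "C = piece N G \<sigma>" by auto
    have "polyhedronT N C" unfolding s(2) using fG dG s(1) by (intro piece_poly) (auto simp: PiE_def)
    moreover have "\<forall>g\<in>G. \<exists>b\<in>dom g. \<exists>c\<in>dom g. b \<noteq> c \<and> (\<forall>w\<in>C. the (g b) + w b = the (g c) + w c)"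
    proof
      fix g assume g: "g \<in> G"
      have "\<sigma> g \<in> pairs g" using s g by auto
      then show "\<exists>b\<in>dom g. \<exists>c\<in>dom g. b \<noteq> c \<and> (\<forall>w\<in>C. the (g b) + w b = the (g c) + w c)"
        using g unfolding s(2) piece_def pairs_def by (intro bexI[of _ "fst (\<sigma> g)"] bexI[of _ "snd (\<sigma> g)"]) auto
    qed
    ultimately show "polyhedronT N C \<and> (\<forall>g\<in>G. \<exists>b\<in>dom g. \<exists>c\<in>dom g. b \<noteq> c \<and>
        (\<forall>w\<in>C. the (g b) + w b = the (g c) + w c))" by blast
  qed
qed

definition ev :: "nat \<Rightarrow> real\<times>real \<Rightarrow> int\<times>int \<Rightarrow> real" where
  "ev N x = (\<lambda>k. if k \<in> T N then real_of_int (fst k) * fst x + real_of_int (snd k) * snd x else 0)"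

definition shiftT :: "nat \<Rightarrow> (int\<times>int \<Rightarrow> real) \<Rightarrow> real \<Rightarrow> int\<times>int \<Rightarrow> real" where
  "shiftT N w c = (\<lambda>k. if k \<in> T N then w k + c else 0)"

lemma ev_W:
  assumes "x \<in> V f0" shows "ev N x \<in> W f0 N"
  unfolding W_def
proof (intro CollectI conjI ballI impI)
  show "ev N x \<in> RT N" unfolding RT_def ev_def by auto
  fix g assume g: "g \<in> rad f0" and d: "dom g \<subseteq> T N"
  have "trop_sol g x" using g assms unfolding rad_def V_def by auto
  then obtain b c where bc: "b\<in>dom g" "c\<in>dom g" "b \<noteq> c" "term_val g b x = term_val g c x"
    "\<forall>d\<in>dom g. term_val g b x \<le> term_val g d x" unfolding trop_sol_def by blast
  have tv: "term_val g e x = the (g e) + ev N x e" if "e \<in> dom g" for e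
    using d that unfolding term_val_def ev_def by auto
  show "lin_sat g (ev N x)" unfolding lin_sat_def
    using bc tv by (intro bexI[of _ b] bexI[of _ c]) auto
qed

lemma lin_sat_shift:
  assumes "lin_sat g w" "\<forall>b\<in>dom g. w' b = w b + c" shows "lin_sat g w'"
proof -
  obtain b1 c1 where 1: "b1\<in>dom g" "c1\<in>dom g" "b1 \<noteq> c1" "the (g b1) + w b1 = the (g c1) + w c1"
    "\<forall>d\<in>dom g. the (g b1) + w b1 \<le> the (g d) + w d" using assms(1) unfolding lin_sat_def by blast
  show ?thesis unfolding lin_sat_def
    using 1 assms(2) by (intro bexI[of _ b1] bexI[of _ c1]) auto
qed

lemma shift_W:
  assumes "w \<in> W f0 N" shows "shiftT N w c \<in> W f0 N"
  using assms unfolding W_def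
proof (intro CollectI conjI ballI impI)
  show "shiftT N w c \<in> RT N" unfolding RT_def shiftT_def by auto
  fix g assume g: "g \<in> rad f0" and d: "dom g \<subseteq> T N"
  have "lin_sat g w" using assms g d unfolding W_def by auto
  then show "lin_sat g (shiftT N w c)" 
    by (rule lin_sat_shift) (use d in \<open>auto simp: shiftT_def\<close>)
qed

lemma lin_sat_min:
  assumes "lin_sat g w1" "lin_sat g w2" shows "lin_sat g (\<lambda>k. min (w1 k) (w2 k))"
proof -
  obtain b1 c1 where 1: "b1\<in>dom g" "c1\<in>dom g" "b1 \<noteq> c1" "the (g b1) + w1 b1 = the (g c1) + w1 c1"
    "\<forall>d\<in>dom g. the (g b1) + w1 b1 \<le> the (g d) + w1 d" using assms(1) unfolding lin_sat_def by blast
  obtain b2 c2 where 2: "b2\<in>dom g" "c2\<in>dom g" "b2 \<noteq> c2" "the (g b2) + w2 b2 = the (g c2) + w2 c2"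
    "\<forall>d\<in>dom g. the (g b2) + w2 b2 \<le> the (g d) + w2 d" using assms(2) unfolding lin_sat_def by blast
  show ?thesis
  proof (cases "the (g b1) + w1 b1 \<le> the (g b2) + w2 b2")
    case True
    have a: "the (g b1) + min (w1 b1) (w2 b1) = the (g b1) + w1 b1"
      using 2(5) 1(1) True by force
    have b: "the (g c1) + min (w1 c1) (w2 c1) = the (g b1) + w1 b1"
      using 2(5) 1(2,4) True by force
    have c: "\<forall>d\<in>dom g. the (g b1) + w1 b1 \<le> the (g d) + min (w1 d) (w2 d)"
      using 1(5) 2(5) True by force
    show ?thesis unfolding lin_sat_def
      using 1 a b c by (intro bexI[of _ b1] bexI[of _ c1]) auto
  next
    case False
    have a: "the (g b2) + min (w1 b2) (w2 b2) = the (g b2) + w2 b2"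
      using 1(5) 2(1) False by force
    have b: "the (g c2) + min (w1 c2) (w2 c2) = the (g b2) + w2 b2"
      using 1(5) 2(2,4) False by force
    have c: "\<forall>d\<in>dom g. the (g b2) + w2 b2 \<le> the (g d) + min (w1 d) (w2 d)"
      using 1(5) 2(5) False by force
    show ?thesis unfolding lin_sat_def
      using 2 a b c by (intro bexI[of _ b2] bexI[of _ c2]) auto
  qed
qed

lemma min_W:
  assumes "w1 \<in> W f0 N" "w2 \<in> W f0 N" shows "(\<lambda>k. min (w1 k) (w2 k)) \<in> W f0 N"
  using assms unfolding W_def RT_def by (auto intro: lin_sat_min)

lemma Min_W:
  assumes "finite S" "S \<noteq> {}" "\<forall>l\<in>S. F l \<in> W f0 N"
  shows "(\<lambda>k. Min ((\<lambda>l. F l k) ` S)) \<in> W f0 N"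
  using assms
proof (induct S rule: finite_ne_induct)
  case (singleton x) then show ?case by simp
next
  case (insert x S)
  have "(\<lambda>k. Min ((\<lambda>l. F l k) ` insert x S)) = (\<lambda>k. min (F x k) (Min ((\<lambda>l. F l k) ` S)))"
    using insert by (simp add: Min_insert)
  then show ?case using insert min_W by simp
qed

lemma dom_f0: "dom f0 = {(0,0),(1,0),(0,1),(1,1)}" unfolding f0_def by auto

lemma the_f0: "b \<in> dom f0 \<Longrightarrow> the (f0 b) = 0" unfolding f0_def by auto

lemma tv_f0: "b \<in> dom f0 \<Longrightarrow> term_val f0 b x = real_of_int (fst b) * fst x + real_of_int (snd b) * snd x"
  unfolding term_val_def using the_f0 by simp

lemma V_x: "(s, 0) \<in> V f0"
  unfolding V_def trop_sol_def
proof (cases "s \<ge> 0")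
  case True then show "(s,0) \<in> {x. \<exists>b\<in>dom f0. \<exists>c\<in>dom f0. b \<noteq> c \<and> term_val f0 b x = term_val f0 c x \<and>
       (\<forall>d\<in>dom f0. term_val f0 b x \<le> term_val f0 d x)}"
    by (intro CollectI bexI[of _ "(0,0)"] bexI[of _ "(0,1)"]) (auto simp: tv_f0 dom_f0)
next
  case False then show "(s,0) \<in> {x. \<exists>b\<in>dom f0. \<exists>c\<in>dom f0. b \<noteq> c \<and> term_val f0 b x = term_val f0 c x \<and>
       (\<forall>d\<in>dom f0. term_val f0 b x \<le> term_val f0 d x)}"
    by (intro CollectI bexI[of _ "(1,0)"] bexI[of _ "(1,1)"]) (auto simp: tv_f0 dom_f0)
qed

lemma V_y: "(0, r) \<in> V f0"
  unfolding V_def trop_sol_def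
proof (cases "r \<ge> 0")
  case True then show "(0,r) \<in> {x. \<exists>b\<in>dom f0. \<exists>c\<in>dom f0. b \<noteq> c \<and> term_val f0 b x = term_val f0 c x \<and>
       (\<forall>d\<in>dom f0. term_val f0 b x \<le> term_val f0 d x)}"
    by (intro CollectI bexI[of _ "(0,0)"] bexI[of _ "(1,0)"]) (auto simp: tv_f0 dom_f0)
next
  case False then show "(0,r) \<in> {x. \<exists>b\<in>dom f0. \<exists>c\<in>dom f0. b \<noteq> c \<and> term_val f0 b x = term_val f0 c x \<and>
       (\<forall>d\<in>dom f0. term_val f0 b x \<le> term_val f0 d x)}"
    by (intro CollectI bexI[of _ "(0,1)"] bexI[of _ "(1,1)"]) (auto simp: tv_f0 dom_f0)
qed

definition eps :: "real \<Rightarrow> int \<Rightarrow> real" where "eps t l = t^(nat l + 1) / 8"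
definition Lf :: "nat \<Rightarrow> real \<Rightarrow> int \<Rightarrow> int\<times>int \<Rightarrow> real" where
  "Lf N t l = shiftT N (ev N (-2 * of_int l, 0)) (of_int l ^ 2 + eps t l)"
definition Phi :: "nat \<Rightarrow> real \<Rightarrow> int\<times>int \<Rightarrow> real" where
  "Phi N t = (\<lambda>k. Min ((\<lambda>l. Lf N t l k) ` {0..<int N}))"
definition cc :: "nat \<Rightarrow> real \<Rightarrow> real" where "cc N t = -1/2 + t^(N+1)/8"
definition Psi :: "nat \<Rightarrow> real \<Rightarrow> int\<times>int \<Rightarrow> real" where
  "Psi N t = shiftT N (ev N (0,1)) (cc N t)"
definition fam :: "nat \<Rightarrow> real \<Rightarrow> int\<times>int \<Rightarrow> real" where
  "fam N t = (\<lambda>k. min (Phi N t k) (Psi N t k))"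

lemma fam_W: assumes "N \<ge> 1" shows "fam N t \<in> W f0 N"
proof -
  have "Phi N t \<in> W f0 N" unfolding Phi_def
    using assms by (intro Min_W) (auto simp: Lf_def intro!: shift_W ev_W V_x)
  moreover have "Psi N t \<in> W f0 N" unfolding Psi_def by (intro shift_W ev_W V_y)
  ultimately show ?thesis unfolding fam_def by (rule min_W)
qed

lemma pow_bounds: "0 < t \<Longrightarrow> t < 1 \<Longrightarrow> m \<ge> 1 \<Longrightarrow> 0 < t ^ m \<and> t ^ m < (1::real)"
  by (simp add: power_less_one_iff)

lemma eps_bounds: "0 < t \<Longrightarrow> t < 1 \<Longrightarrow> 0 < eps t l \<and> eps t l < 1/8"
  unfolding eps_def using pow_bounds[of t "nat l + 1"] by auto

lemma cc_bounds: "0 < t \<Longrightarrow> t < 1 \<Longrightarrow> -1/2 < cc N t \<and> cc N t < -3/8"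
  unfolding cc_def using pow_bounds[of t "N + 1"] by auto

lemma sq_ge1: "(l::int) \<noteq> i \<Longrightarrow> 1 \<le> (l - i)^2"
proof -
  assume "l \<noteq> i"
  then have "1 \<le> \<bar>l - i\<bar>" by simp
  then have "1 * 1 \<le> \<bar>l - i\<bar> * \<bar>l - i\<bar>" by (intro mult_mono) auto
  then show ?thesis by (simp add: power2_eq_square abs_mult[symmetric])
qed

lemma Phi_val:
  assumes t: "0 < t" "t < 1" and k: "k \<in> T N"
  shows "Phi N t k = eps t (fst k) - (of_int (fst k))^2"
proof -
  obtain i j where ij: "k = (i,j)" "i \<in> {0..<int N}" "j \<in> {0..<int N}" using k unfolding T_def by auto
  have Lv: "Lf N t l k = (of_int l - of_int i)^2 - (of_int i)^2 + eps t l" for l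
    using k ij unfolding Lf_def shiftT_def ev_def by (simp add: power2_eq_square algebra_simps)
  have "Min ((\<lambda>l. Lf N t l k) ` {0..<int N}) = eps t i - (of_int i)^2"
  proof (rule Min_eqI)
    show "finite ((\<lambda>l. Lf N t l k) ` {0..<int N})" by simp
    show "eps t i - (of_int i)^2 \<in> (\<lambda>l. Lf N t l k) ` {0..<int N}"
      using ij(2,3) by (intro image_eqI[of _ _ i]) (simp_all add: Lv)
  next
    fix y assume "y \<in> (\<lambda>l. Lf N t l k) ` {0..<int N}"
    then obtain l where y: "y = Lf N t l k" by auto
    show "eps t i - (of_int i)^2 \<le> y"
    proof (cases "l = i")
      case True then show ?thesis using y Lv by simp
    next
      case False
      have "1 \<le> real_of_int ((l - i)^2)" using sq_ge1[OF False] by linarith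
      then have "1 \<le> (of_int l - of_int i :: real)^2" by simp
      then show ?thesis using y Lv[of l] eps_bounds[OF t, of i] eps_bounds[OF t, of l] by linarith
    qed
  qed
  then show ?thesis unfolding Phi_def using ij by simp
qed

lemma Phi_out: assumes "N \<ge> 1" "k \<notin> T N" shows "Phi N t k = 0"
proof -
  have eq: "(\<lambda>l. Lf N t l k) = (\<lambda>l. 0)" using assms unfolding Lf_def shiftT_def by auto
  have ne: "{0..<int N} \<noteq> {}" using assms by simp
  have "(\<lambda>l. Lf N t l k) ` {0..<int N} = (\<lambda>l. 0) ` {0..<int N}" unfolding eq ..
  also have "\<dots> = {0}" using ne by (simp only: image_constant_conv if_False)
  finally have "(\<lambda>l. Lf N t l k) ` {0..<int N} = {0}" .
  then show ?thesis unfolding Phi_def by simp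
qed

lemma fam_val:
  assumes t: "0 < t" "t < 1" and k: "k \<in> T N"
  shows "fam N t k = (if k = (0,0) then cc N t else eps t (fst k) - (of_int (fst k))^2)"
proof -
  obtain i j where ij: "k = (i,j)" "0 \<le> i" "0 \<le> j" using k unfolding T_def by auto
  have Ps: "Psi N t k = of_int j + cc N t" using k ij unfolding Psi_def shiftT_def ev_def by simp
  have Ph: "Phi N t k = eps t i - (of_int i)^2" using Phi_val[OF t k] ij by simp
  note e = eps_bounds[OF t, of i] and c = cc_bounds[OF t, of N]
  show ?thesis
  proof (cases "k = (0,0)")
    case True then show ?thesis using Ps Ph e c ij unfolding fam_def by auto
  next
    case False
    show ?thesis
    proof (cases "i = 0")
      case True
      then have "j \<ge> 1" using False ij by auto
      then have "real_of_int j \<ge> 1" by simp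
      then show ?thesis using Ps Ph e c ij True False unfolding fam_def by auto
    next
      case i0: False
      then have "i \<ge> 1" using ij by auto
      then have "real_of_int i \<ge> 1" by simp
      then have "(real_of_int i)^2 \<ge> 1" by (simp add: one_le_power)
      moreover have "real_of_int j \<ge> 0" using ij by simp
      ultimately show ?thesis using Ps Ph e c ij False unfolding fam_def by auto
    qed
  qed
qed

lemma fam_out: assumes "N \<ge> 1" "k \<notin> T N" shows "fam N t k = 0"
  using assms Phi_out unfolding fam_def Psi_def shiftT_def by simp

lemma vandermonde:
  fixes S :: "real set"
  assumes fS: "finite S" and z: "\<forall>m<card S. (\<Sum>s\<in>S. v s * s^m) = 0"
  shows "\<forall>s\<in>S. v s = 0"
proof
  fix s0 assume s0: "s0 \<in> S"
  define q where "q = (\<Prod>s\<in>S-{s0}. [:-s, 1:])"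
  have dq: "degree q \<le> card S - 1"
  proof -
    have "degree q \<le> (\<Sum>s\<in>S-{s0}. degree [:-s, 1:])"
      unfolding q_def using degree_prod_sum_le[of "S-{s0}" "\<lambda>s. [:-s, 1:]"] fS by (simp add: o_def)
    also have "\<dots> = card (S - {s0})" by simp
    finally show ?thesis using s0 fS by simp
  qed
  have "card S \<noteq> 0" using s0 fS by auto
  then have cS: "card S \<ge> 1" by linarith
  have pq: "poly q x = (\<Prod>s\<in>S-{s0}. x - s)" for x unfolding q_def by (simp add: poly_prod)
  have "(\<Sum>s\<in>S. v s * poly q s) = (\<Sum>s\<in>S. v s * (\<Sum>i\<le>degree q. coeff q i * s ^ i))"
    by (simp only: poly_altdef)
  also have "\<dots> = (\<Sum>i\<le>degree q. coeff q i * (\<Sum>s\<in>S. v s * s ^ i))"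
  proof -
    have "(\<Sum>s\<in>S. v s * (\<Sum>i\<le>degree q. coeff q i * s ^ i)) =
       (\<Sum>s\<in>S. \<Sum>i\<le>degree q. coeff q i * (v s * s ^ i))"
      by (simp add: sum_distrib_left mult_ac)
    also have "\<dots> = (\<Sum>i\<le>degree q. \<Sum>s\<in>S. coeff q i * (v s * s ^ i))"
      by (rule sum.swap)
    also have "\<dots> = (\<Sum>i\<le>degree q. coeff q i * (\<Sum>s\<in>S. v s * s ^ i))"
      by (simp add: sum_distrib_left)
    finally show ?thesis .
  qed
  also have "\<dots> = 0"
  proof (rule sum.neutral, rule ballI)
    fix i assume "i \<in> {..degree q}"
    then have "i < card S" using dq cS by auto
    then show "coeff q i * (\<Sum>s\<in>S. v s * s ^ i) = 0" using z by simp
  qed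
  finally have sum0: "(\<Sum>s\<in>S. v s * poly q s) = 0" .
  have "(\<Sum>s\<in>S. v s * poly q s) = v s0 * poly q s0 + (\<Sum>s\<in>S-{s0}. v s * poly q s)"
    using fS s0 by (simp add: sum.remove)
  also have "(\<Sum>s\<in>S-{s0}. v s * poly q s) = 0"
  proof (rule sum.neutral, rule ballI)
    fix s assume s: "s \<in> S - {s0}"
    have "poly q s = 0" unfolding pq using fS s by (simp add: prod_zero_iff)
    then show "v s * poly q s = 0" by simp
  qed
  finally have "v s0 * poly q s0 = 0" using sum0 by simp
  moreover have "poly q s0 \<noteq> 0" unfolding pq using fS by (simp add: prod_zero_iff)
  ultimately show "v s0 = 0" by simp
qed


lemma fam_cell:
  assumes N2: "N \<ge> 2" and m: "1 \<le> m" "m \<le> N + 1"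
  shows "\<exists>k \<alpha>. \<forall>t. 0 < t \<longrightarrow> t < 1 \<longrightarrow> fam N t k = \<alpha> + t^m / 8"
proof -
  consider "m = 1" | "2 \<le> m \<and> m \<le> N" | "m = N + 1" using m by linarith
  then show ?thesis
  proof cases
    case 1
    have "(0,1) \<in> T N" using N2 unfolding T_def by auto
    then have "fam N t (0,1) = 0 + t^m / 8" if "0 < t" "t < 1" for t
      using fam_val[OF that] 1 by (simp add: eps_def)
    then show ?thesis by blast
  next
    case 2
    have T: "(int m - 1, 0) \<in> T N" using N2 2 unfolding T_def by auto
    have nm: "nat (int m - 1) + 1 = m" using 2 by auto
    have ne: "(int m - 1, 0::int) \<noteq> (0,0)" using 2 by auto
    have "fam N t (int m - 1, 0) = (0 - (of_int (int m - 1))^2) + t^m / 8" if "0 < t" "t < 1" for t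
    proof -
      have "fam N t (int m - 1, 0) = eps t (int m - 1) - (of_int (int m - 1))^2"
        using fam_val[OF that T] ne by (simp only: if_False fst_conv)
      also have "eps t (int m - 1) = t^m / 8" unfolding eps_def nm ..
      finally show ?thesis by simp
    qed
    then show ?thesis by blast
  next
    case 3
    have "(0,0) \<in> T N" using N2 unfolding T_def by auto
    then have "fam N t (0,0) = -1/2 + t^m / 8" if "0 < t" "t < 1" for t
      using fam_val[OF that] 3 by (simp add: cc_def)
    then show ?thesis by blast
  qed
qed

lemma fam_inj:
  assumes N2: "N \<ge> 2" shows "inj_on (fam N) {0<..<1}"
proof (rule inj_onI)
  fix s t assume s: "s \<in> {0<..<1::real}" and t: "t \<in> {0<..<1::real}" and e: "fam N s = fam N t"
  have T: "(0,1) \<in> T N" using N2 unfolding T_def by auto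
  have "fam N s (0,1) = s / 8" using fam_val[where t=s and k="(0,1)" and N=N] s T by (simp add: eps_def)
  moreover have "fam N t (0,1) = t / 8" using fam_val[where t=t and k="(0,1)" and N=N] t T by (simp add: eps_def)
  moreover have "fam N s (0,1) = fam N t (0,1)" using e by (rule fun_cong)
  ultimately show "s = t" by linarith
qed

lemma fam_aff:
  assumes N2: "N \<ge> 2" and S: "S \<subseteq> {0<..<1}" "finite S" "card S = N + 2"
  shows "aff_indep (fam N ` S)"
  unfolding aff_indep_def
proof (intro conjI allI impI ballI)
  show "finite (fam N ` S)" using S by simp
  fix u a assume h: "(\<Sum>a\<in>fam N ` S. u a) = 0 \<and> (\<forall>k. (\<Sum>a\<in>fam N ` S. u a * a k) = 0)"
    and a: "a \<in> fam N ` S"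
  have inj: "inj_on (fam N) S" using fam_inj[OF N2] S(1) by (rule inj_on_subset)
  define v where "v s = u (fam N s)" for s
  have s0: "(\<Sum>s\<in>S. v s) = 0" using h inj unfolding v_def by (simp add: sum.reindex)
  have sk: "(\<Sum>s\<in>S. v s * fam N s k) = 0" for k
  proof -
    have "(\<Sum>a\<in>fam N ` S. u a * a k) = 0" using h by blast
    then show ?thesis using inj unfolding v_def by (simp add: sum.reindex)
  qed
  have "\<forall>m<card S. (\<Sum>s\<in>S. v s * s^m) = 0"
  proof (intro allI impI)
    fix m assume "m < card S"
    then have mN: "m \<le> N + 1" using S by simp
    show "(\<Sum>s\<in>S. v s * s^m) = 0"
    proof (cases "m = 0")
      case True then show ?thesis using s0 by simp
    next
      case False
      then obtain k \<alpha> where ka: "\<forall>t. 0 < t \<longrightarrow> t < 1 \<longrightarrow> fam N t k = \<alpha> + t^m / 8"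
        using fam_cell[OF N2, of m] mN by auto
      have "(\<Sum>s\<in>S. v s * fam N s k) = (\<Sum>s\<in>S. \<alpha> * v s + v s * s^m / 8)"
        using ka S(1) by (intro sum.cong) (auto simp: algebra_simps)
      also have "\<dots> = \<alpha> * (\<Sum>s\<in>S. v s) + (\<Sum>s\<in>S. v s * s^m) / 8"
        by (simp add: sum.distrib sum_distrib_left sum_divide_distrib)
      finally show ?thesis using sk[of k] s0 by simp
    qed
  qed
  then have "\<forall>s\<in>S. v s = 0" using vandermonde[OF S(2)] by blast
  then show "u a = 0" using a unfolding v_def by auto
qed

lemma cover_lb:
  assumes N2: "N \<ge> 2" and WP: "W f0 N \<subseteq> P" and fin: "finite \<C>" and U: "\<Union>\<C> = P"
    and pc: "\<forall>C\<in>\<C>. polyhedronT N C \<and> adim C \<le> d"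
  shows "int N + 1 \<le> d"
proof -
  let ?X = "{0<..<1::real}"
  have inf: "infinite ?X" by simp
  have inP: "fam N t \<in> P" for t using fam_W[of N t] N2 WP by auto
  have "?X = (\<Union>C\<in>\<C>. {t\<in>?X. fam N t \<in> C})" using inP U by auto
  then obtain C where C: "C \<in> \<C>" "infinite {t\<in>?X. fam N t \<in> C}"
    using inf fin by (metis (no_types, lifting) finite_UN)
  obtain S where S: "S \<subseteq> {t\<in>?X. fam N t \<in> C}" "finite S" "card S = N + 2"
    using infinite_arbitrarily_large[OF C(2)] by blast
  have SX: "S \<subseteq> ?X" using S by auto
  have aff: "aff_indep (fam N ` S)" using fam_aff[OF N2 SX S(2,3)] .
  have inj: "inj_on (fam N) S" using fam_inj[OF N2] SX by (rule inj_on_subset)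
  have AC: "fam N ` S \<subseteq> C" using S by auto
  have CRT: "C \<subseteq> RT N" using pc C(1) unfolding polyhedronT_def by auto
  have "int (card (fam N ` S)) - 1 \<le> adim C"
    by (rule adim_ge[OF _ AC aff]) (use RT_bound CRT in blast)
  moreover have "card (fam N ` S) = N + 2" using card_image[OF inj] S by simp
  ultimately show ?thesis using pc C(1) by auto
qed

lemma rainbow:
  fixes col :: "'a \<times> 'b \<Rightarrow> 'c"
  assumes "finite I" "finite J" "I \<noteq> {}" "J \<noteq> {}"
   and "\<forall>i\<in>I. \<forall>i'\<in>I. \<forall>j\<in>J. \<forall>j'\<in>J. i \<noteq> i' \<longrightarrow> j \<noteq> j' \<longrightarrow>
      (col (i,j) = col (i',j) \<or> col (i,j) = col (i,j') \<or> col (i,j) = col (i',j') \<or>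
       col (i',j) = col (i,j') \<or> col (i',j) = col (i',j') \<or> col (i,j') = col (i',j'))"
  shows "card (col ` (I \<times> J)) + 1 \<le> card I + card J"
  using assms
proof (induct "card I + card J" arbitrary: I J rule: less_induct)
  case less
  note fI = less.prems(1) and fJ = less.prems(2) and neI = less.prems(3) and neJ = less.prems(4)
    and nr = less.prems(5)
  have cI: "card I \<ge> 1" "card J \<ge> 1" using fI fJ neI neJ by (auto simp: Suc_le_eq card_gt_0_iff)
  show ?case
  proof (cases "card J = 1")
    case True
    then obtain j where J: "J = {j}" by (auto simp: card_Suc_eq)
    have "col ` (I \<times> J) = (\<lambda>i. col (i,j)) ` I" unfolding J by auto
    then have "card (col ` (I \<times> J)) \<le> card I" using card_image_le[OF fI] by simp
    then show ?thesis using True by simp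
  next
    case False
    then have cJ2: "card J \<ge> 2" using cI by simp
    obtain n where n: "n \<in> J" using neJ by auto
    define J' where "J' = J - {n}"
    have cJ': "card J' = card J - 1" unfolding J'_def using n fJ by simp
    have neJ': "J' \<noteq> {}" using cJ' cJ2 by auto
    have fJ': "finite J'" unfolding J'_def using fJ by simp
    have IH': "card (col ` (I \<times> J')) + 1 \<le> card I + card J'"
      by (rule less.hyps) (use cJ' cJ2 fI fJ' neI neJ' nr in \<open>auto simp: J'_def\<close>)
    define Pn where "Pn = col ` (I \<times> {n}) - col ` (I \<times> J')"
    have fPn: "finite Pn" unfolding Pn_def using fI by simp
    have sub1: "col ` (I \<times> J) \<subseteq> col ` (I \<times> J') \<union> Pn" unfolding Pn_def J'_def by auto
    show ?thesis
    proof (cases "card Pn \<le> 1")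
      case True
      have "card (col ` (I \<times> J)) \<le> card (col ` (I \<times> J') \<union> Pn)"
        using sub1 fPn fI fJ' by (intro card_mono) auto
      also have "\<dots> \<le> card (col ` (I \<times> J')) + card Pn" by (rule card_Un_le)
      finally show ?thesis using IH' True cJ' cJ2 by simp
    next
      case False
      then obtain \<alpha> \<beta> where ab: "\<alpha> \<in> Pn" "\<beta> \<in> Pn" "\<alpha> \<noteq> \<beta>"
        using card_le_Suc0_iff_eq[OF fPn] by auto
      obtain r where r: "r \<in> I" "\<alpha> = col (r, n)" using ab(1) unfolding Pn_def by auto
      obtain s where s: "s \<in> I" "\<beta> = col (s, n)" using ab(2) unfolding Pn_def by auto
      have anot: "\<alpha> \<notin> col ` (I \<times> J')" "\<beta> \<notin> col ` (I \<times> J')" using ab unfolding Pn_def by auto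
      have rs: "r \<noteq> s" using r s ab(3) by auto
      have rows: "col (r, j) = col (s, j)" if j: "j \<in> J'" for j
      proof -
        have jn: "j \<noteq> n" "j \<in> J" using j unfolding J'_def by auto
        have c1: "col (r,j) \<noteq> \<alpha>" "col (r,j) \<noteq> \<beta>" "col (s,j) \<noteq> \<alpha>" "col (s,j) \<noteq> \<beta>"
          using anot r(1) s(1) j by auto
        show ?thesis using nr r s rs jn n c1 ab(3) by metis
      qed
      define I' where "I' = I - {r}"
      have cI': "card I' = card I - 1" unfolding I'_def using r fI by simp
      have sI': "s \<in> I'" unfolding I'_def using s rs by auto
      have fI': "finite I'" unfolding I'_def using fI by simp
      have IH2: "card (col ` (I' \<times> J)) + 1 \<le> card I' + card J"
        by (rule less.hyps) (use cI' cI(1) sI' fI' fJ neJ nr cJ2 in \<open>auto simp: I'_def\<close>)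
      have sub2: "col ` (I \<times> J) \<subseteq> insert \<alpha> (col ` (I' \<times> J))"
      proof
        fix x assume "x \<in> col ` (I \<times> J)"
        then obtain i j where ij: "i \<in> I" "j \<in> J" "x = col (i,j)" by auto
        show "x \<in> insert \<alpha> (col ` (I' \<times> J))"
        proof (cases "i = r")
          case False then show ?thesis using ij unfolding I'_def by auto
        next
          case True
          show ?thesis
          proof (cases "j = n")
            case True then show ?thesis using ij r \<open>i = r\<close> by auto
          next
            case False
            then have "j \<in> J'" using ij unfolding J'_def by auto
            then have "x = col (s, j)" using rows ij \<open>i = r\<close> by auto
            then show ?thesis using sI' ij by auto
          qed
        qed
      qed
      have "card (col ` (I \<times> J)) \<le> card (insert \<alpha> (col ` (I' \<times> J)))"
        using sub2 fI' fJ by (intro card_mono) auto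
      also have "\<dots> \<le> card (col ` (I' \<times> J)) + 1" using fI' fJ by (simp add: card_insert_if)
      finally show ?thesis using IH2 cI' cI by simp
    qed
  qed
qed


lemma V_cross: assumes "x \<in> V f0" shows "fst x = 0 \<or> snd x = 0"
proof -
  obtain X Y where x: "x = (X,Y)" by (cases x)
  obtain b c where bc: "b\<in>dom f0" "c\<in>dom f0" "b \<noteq> c" "term_val f0 b x = term_val f0 c x"
    "\<forall>d\<in>dom f0. term_val f0 b x \<le> term_val f0 d x"
    using assms unfolding V_def trop_sol_def by blast
  have le: "term_val f0 b x \<le> 0" "term_val f0 b x \<le> X" "term_val f0 b x \<le> Y" "term_val f0 b x \<le> X + Y"
    using bc(5) x by (auto simp: dom_f0 tv_f0)
  have b4: "b \<in> {(0,0),(1,0),(0,1),(1,1)}" "c \<in> {(0,0),(1,0),(0,1),(1,1)}" using bc dom_f0 by auto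
  show ?thesis using b4 bc(1-4) le x by (auto simp: tv_f0)
qed

definition rectp :: "(int\<times>int) set \<Rightarrow> tpoly" where
  "rectp Q = (\<lambda>k. if k \<in> Q then Some 0 else None)"

lemma dom_rectp: "dom (rectp Q) = Q" unfolding rectp_def dom_def by auto

lemma the_rectp: "b \<in> Q \<Longrightarrow> the (rectp Q b) = 0" unfolding rectp_def by auto

lemma trop_sol_rect:
  assumes Q: "dom g = {i,i'} \<times> {j,j'}" and bc: "b \<in> dom g" "c \<in> dom g" "b \<noteq> c"
    and eq: "term_val g b x = term_val g c x"
    and le: "term_val g b x \<le> term_val g (i,j) x" "term_val g b x \<le> term_val g (i,j') x"
      "term_val g b x \<le> term_val g (i',j) x" "term_val g b x \<le> term_val g (i',j') x"
  shows "trop_sol g x"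
proof -
  have "\<forall>d\<in>dom g. term_val g b x \<le> term_val g d x" using le Q by auto
  then show ?thesis unfolding trop_sol_def using bc eq by blast
qed

lemma rect_rad0:
  assumes "i \<noteq> i'" "j \<noteq> j'" and Q: "Q = {i,i'} \<times> {j,j'}"
  shows "rectp Q \<in> rad f0"
  unfolding rad_def
proof (intro CollectI conjI subsetI)
  show "is_tpoly (rectp Q)" unfolding is_tpoly_def dom_rectp Q by auto
  fix x assume x: "x \<in> V f0"
  have tv: "term_val (rectp Q) b x = real_of_int (fst b) * fst x + real_of_int (snd b) * snd x"
    if "b \<in> Q" for b unfolding term_val_def using the_rectp[OF that] by simp
  have c0: "(i,j) \<in> Q" "(i,j') \<in> Q" "(i',j) \<in> Q" "(i',j') \<in> Q" using Q by auto
  have c: "(i,j) \<in> dom (rectp Q)" "(i,j') \<in> dom (rectp Q)" "(i',j) \<in> dom (rectp Q)" "(i',j') \<in> dom (rectp Q)" using c0 dom_rectp by auto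
  have tv4: "term_val (rectp Q) (i,j) x = real_of_int i * fst x + real_of_int j * snd x"
    "term_val (rectp Q) (i,j') x = real_of_int i * fst x + real_of_int j' * snd x"
    "term_val (rectp Q) (i',j) x = real_of_int i' * fst x + real_of_int j * snd x"
    "term_val (rectp Q) (i',j') x = real_of_int i' * fst x + real_of_int j' * snd x"
    using tv[OF c0(1)] tv[OF c0(2)] tv[OF c0(3)] tv[OF c0(4)] by simp_all
  have dQ: "dom (rectp Q) = {i,i'} \<times> {j,j'}" using Q dom_rectp by simp
  consider "snd x = 0" | "fst x = 0" using V_cross[OF x] by blast
  then show "x \<in> V (rectp Q)"
  proof cases
    case 1
    show ?thesis
    proof (cases "real_of_int i * fst x \<le> real_of_int i' * fst x")
      case True
      have "trop_sol (rectp Q) x"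
        by (rule trop_sol_rect[OF dQ c(1) c(2)]) (use assms(1,2) 1 True in \<open>auto simp: tv4\<close>)
      then show ?thesis unfolding V_def by simp
    next
      case False
      have "trop_sol (rectp Q) x"
        by (rule trop_sol_rect[OF dQ c(3) c(4)]) (use assms(1,2) 1 False in \<open>auto simp: tv4\<close>)
      then show ?thesis unfolding V_def by simp
    qed
  next
    case 2
    show ?thesis
    proof (cases "real_of_int j * snd x \<le> real_of_int j' * snd x")
      case True
      have "trop_sol (rectp Q) x"
        by (rule trop_sol_rect[OF dQ c(1) c(3)]) (use assms(1,2) 2 True in \<open>auto simp: tv4\<close>)
      then show ?thesis unfolding V_def by simp
    next
      case False
      have "trop_sol (rectp Q) x"
        by (rule trop_sol_rect[OF dQ c(2) c(4)]) (use assms(1,2) 2 False in \<open>auto simp: tv4\<close>)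
      then show ?thesis unfolding V_def by simp
    qed
  qed
qed

definition Rg :: "nat \<Rightarrow> int set" where "Rg N = {0..<int N}"

definition Grect :: "nat \<Rightarrow> tpoly set" where
  "Grect N = (\<lambda>(i,i',j,j'). rectp ({i,i'} \<times> {j,j'})) `
     {(i,i',j,j'). i \<in> Rg N \<and> i' \<in> Rg N \<and> j \<in> Rg N \<and> j' \<in> Rg N \<and> i \<noteq> i' \<and> j \<noteq> j'}"

definition Prect :: "nat \<Rightarrow> (int\<times>int \<Rightarrow> real) set" where
  "Prect N = {w \<in> RT N. \<forall>g\<in>Grect N. lin_sat g w}"

lemma Grect_fin: "finite (Grect N)"
proof -
  have "{(i,i',j,j'). i \<in> Rg N \<and> i' \<in> Rg N \<and> j \<in> Rg N \<and> j' \<in> Rg N \<and> i \<noteq> i' \<and> j \<noteq> j'}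
     \<subseteq> Rg N \<times> Rg N \<times> Rg N \<times> Rg N" by auto
  moreover have "finite (Rg N \<times> Rg N \<times> Rg N \<times> Rg N)" unfolding Rg_def by simp
  ultimately show ?thesis unfolding Grect_def by (meson finite_imageI finite_subset)
qed

lemma Grect_mem:
  assumes "i \<in> Rg N" "i' \<in> Rg N" "j \<in> Rg N" "j' \<in> Rg N" "i \<noteq> i'" "j \<noteq> j'"
  shows "rectp ({i,i'} \<times> {j,j'}) \<in> Grect N"
  unfolding Grect_def using assms by (intro image_eqI[of _ _ "(i,i',j,j')"]) auto

lemma Grect_props:
  assumes "g \<in> Grect N"
  shows "g \<in> rad f0 \<and> is_tpoly g \<and> dom g \<subseteq> T N"
proof -
  obtain i i' j j' where ij: "g = rectp ({i,i'} \<times> {j,j'})" "i \<in> Rg N" "i' \<in> Rg N" "j \<in> Rg N"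
    "j' \<in> Rg N" "i \<noteq> i'" "j \<noteq> j'"
  proof -
    obtain p where p: "p \<in> {(i,i',j,j'). i \<in> Rg N \<and> i' \<in> Rg N \<and> j \<in> Rg N \<and> j' \<in> Rg N \<and> i \<noteq> i' \<and> j \<noteq> j'}"
      "g = (\<lambda>(i,i',j,j'). rectp ({i,i'} \<times> {j,j'})) p"
      using assms unfolding Grect_def by (rule imageE) blast
    obtain i i' j j' where pp: "p = (i,i',j,j')" by (cases p) blast
    show ?thesis using p unfolding pp by (intro that[of i i' j j']) auto
  qed
  have "g \<in> rad f0" unfolding ij(1) using ij by (intro rect_rad0) auto
  moreover have "is_tpoly g" unfolding ij(1) is_tpoly_def dom_rectp by auto
  moreover have "dom g \<subseteq> T N" unfolding ij(1) dom_rectp T_def using ij unfolding Rg_def by auto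
  ultimately show ?thesis by blast
qed

lemma Prect_prev: "trop_lin_prevariety N (Prect N)"
proof -
  have "\<forall>g\<in>Grect N. is_tpoly g \<and> dom g \<subseteq> T N" using Grect_props by blast
  then show ?thesis unfolding trop_lin_prevariety_def
    by (intro exI[of _ "Grect N"] conjI) (simp_all add: Grect_fin Prect_def)
qed

lemma W_Prect: "W f0 N \<subseteq> Prect N"
proof
  fix w assume w: "w \<in> W f0 N"
  have "lin_sat g w" if "g \<in> Grect N" for g using w Grect_props[OF that] unfolding W_def by blast
  then show "w \<in> Prect N" using w unfolding W_def Prect_def by blast
qed

lemma piece_bound:
  assumes CRT: "C \<subseteq> RT N"
    and eq: "\<forall>g\<in>Grect N. \<exists>b\<in>dom g. \<exists>c\<in>dom g. b \<noteq> c \<and> (\<forall>w\<in>C. the (g b) + w b = the (g c) + w c)"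
    and N1: "N \<ge> 1"
  shows "adim C \<le> 2 * int N - 1"
proof -
  define col where "col x = {y \<in> T N. \<forall>w\<in>C. w y = w x}" for x
  have TR: "T N = Rg N \<times> Rg N" unfolding T_def Rg_def ..
  have cardR: "card (Rg N) = N" unfolding Rg_def by simp
  have nr: "\<forall>i\<in>Rg N. \<forall>i'\<in>Rg N. \<forall>j\<in>Rg N. \<forall>j'\<in>Rg N. i \<noteq> i' \<longrightarrow> j \<noteq> j' \<longrightarrow>
      (col (i,j) = col (i',j) \<or> col (i,j) = col (i,j') \<or> col (i,j) = col (i',j') \<or>
       col (i',j) = col (i,j') \<or> col (i',j) = col (i',j') \<or> col (i,j') = col (i',j'))"
  proof (intro ballI impI)
    fix i i' j j' assume h: "i \<in> Rg N" "i' \<in> Rg N" "j \<in> Rg N" "j' \<in> Rg N" "i \<noteq> i'" "j \<noteq> j'"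
    let ?Q = "{i,i'} \<times> {j,j'}"
    have mem: "rectp ?Q \<in> Grect N" using Grect_mem[OF h] .
    have "\<exists>b\<in>dom (rectp ?Q). \<exists>c\<in>dom (rectp ?Q). b \<noteq> c \<and>
      (\<forall>w\<in>C. the (rectp ?Q b) + w b = the (rectp ?Q c) + w c)" using bspec[OF eq mem] .
    then obtain b c where bc: "b \<in> ?Q" "c \<in> ?Q" "b \<noteq> c"
      "\<forall>w\<in>C. the (rectp ?Q b) + w b = the (rectp ?Q c) + w c"
      unfolding dom_rectp by (elim bexE conjE) (rule that)
    have "\<forall>w\<in>C. w b = w c" using bc(4) the_rectp[OF bc(1)] the_rectp[OF bc(2)] by simp
    then have cbc: "col b = col c" unfolding col_def by auto
    have b4: "b = (i,j) \<or> b = (i,j') \<or> b = (i',j) \<or> b = (i',j')" using bc(1) by auto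
    have c4: "c = (i,j) \<or> c = (i,j') \<or> c = (i',j) \<or> c = (i',j')" using bc(2) by auto
    show "col (i,j) = col (i',j) \<or> col (i,j) = col (i,j') \<or> col (i,j) = col (i',j') \<or>
       col (i',j) = col (i,j') \<or> col (i',j) = col (i',j') \<or> col (i,j') = col (i',j')"
      using b4 c4 cbc bc(3) by (elim disjE) simp_all
  qed
  have neR: "Rg N \<noteq> {}" unfolding Rg_def using N1 by simp
  have rb: "card (col ` (Rg N \<times> Rg N)) + 1 \<le> card (Rg N) + card (Rg N)"
    by (rule rainbow) (use nr neR in \<open>auto simp: Rg_def\<close>)
  let ?I = "col ` T N"
  have cI: "card ?I + 1 \<le> 2 * N" using rb unfolding TR cardR by simp
  have colsub: "col x \<subseteq> T N" for x unfolding col_def by auto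
  have selfcol: "k \<in> T N \<Longrightarrow> k \<in> col k" for k unfolding col_def by auto
  have colmem: "k \<in> col x \<Longrightarrow> col k = col x" for k x unfolding col_def by auto
  have bound: "card A \<le> card ?I + 1" if A: "A \<subseteq> C" "aff_indep A" for A
  proof (rule aff_bound[where E = "\<lambda>K k. if k \<in> K then 1 else 0" and p = "(-1,-1)"])
    show "finite ?I" using finite_T by simp
    show "\<forall>i\<in>?I. (if (- 1, - 1) \<in> i then 1 else 0) = (0::real)"
      using colsub unfolding T_def by fastforce
    show "\<forall>a\<in>A. a (- 1, - 1) = 0" using A CRT unfolding RT_def T_def by auto
    show "aff_indep A" by fact
    show "\<forall>a\<in>A. \<exists>l. \<forall>k. a k = (\<Sum>i\<in>?I. l i * (if k \<in> i then 1 else 0))"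
    proof
      fix a assume a: "a \<in> A"
      have aC: "a \<in> C" using a A by auto
      define l where "l K = a (SOME y. y \<in> K)" for K
      have "a k = (\<Sum>K\<in>?I. l K * (if k \<in> K then 1 else 0))" for k
      proof (cases "k \<in> T N")
        case True
        have "(\<Sum>K\<in>?I. l K * (if k \<in> K then 1 else 0)) = (\<Sum>K\<in>?I. if col k = K then l K else 0)"
        proof (intro sum.cong refl)
          fix K assume "K \<in> ?I"
          then obtain x where x: "K = col x" by auto
          show "l K * (if k \<in> K then 1 else 0) = (if col k = K then l K else 0)"
            using colmem[of k x] selfcol[OF True] x by auto
        qed
        also have "\<dots> = l (col k)" using True finite_T[of N] by (simp add: sum.delta)
        also have "\<dots> = a k"
        proof -
          have "(SOME y. y \<in> col k) \<in> col k" using selfcol[OF True] by (rule someI)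
          then show ?thesis unfolding l_def using aC unfolding col_def by auto
        qed
        finally show ?thesis by simp
      next
        case False
        have "(\<Sum>K\<in>?I. l K * (if k \<in> K then 1 else 0)) = 0"
          using False colsub by (intro sum.neutral) auto
        moreover have "a k = 0" using False aC CRT unfolding RT_def by blast
        ultimately show ?thesis by simp
      qed
      then show "\<exists>l. \<forall>k. a k = (\<Sum>i\<in>?I. l i * (if k \<in> i then 1 else 0))" by blast
    qed
  qed
  have "adim C \<le> int (card ?I + 1) - 1" by (rule adim_le) (use bound in blast)
  then show ?thesis using cI by linarith
qed

lemma poly_sub_RT: "polyhedronT N C \<Longrightarrow> C \<subseteq> RT N"
  unfolding polyhedronT_def by auto

lemma pdim_lb:
  assumes N2: "N \<ge> 2" and pv: "trop_lin_prevariety N P" and WP: "W f0 N \<subseteq> P"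
  shows "int N + 1 \<le> pdim N P"
proof -
  obtain G where G: "finite G" "\<forall>g\<in>G. is_tpoly g \<and> dom g \<subseteq> T N" "P = {w\<in>RT N. \<forall>g\<in>G. lin_sat g w}"
    using pv unfolding trop_lin_prevariety_def by blast
  have dG: "\<forall>g\<in>G. finite (dom g) \<and> dom g \<subseteq> T N" using G(2) unfolding is_tpoly_def by blast
  obtain \<C> where C: "finite \<C>" "\<Union>\<C> = {w\<in>RT N. \<forall>g\<in>G. lin_sat g w}" "\<forall>C\<in>\<C>. polyhedronT N C"
    using decomp[OF G(1) dG] by blast
  let ?S = "{d. \<exists>\<C>. finite \<C> \<and> \<Union>\<C> = P \<and> (\<forall>C\<in>\<C>. polyhedronT N C \<and> adim C \<le> d)}"
  have ad: "adim C \<le> int (N * N + 1) - 1" if "C \<in> \<C>" for C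
  proof (rule adim_le)
    have "C \<subseteq> RT N" using C(3) that poly_sub_RT by blast
    then show "\<forall>A. A \<subseteq> C \<longrightarrow> aff_indep A \<longrightarrow> card A \<le> N * N + 1" using RT_bound by blast
  qed
  have "int (N * N) \<in> ?S"
  proof -
    have "\<forall>C\<in>\<C>. polyhedronT N C \<and> adim C \<le> int (N * N)" using C(3) ad by force
    then show ?thesis using C(1,2) G(3) by blast
  qed
  then have ne: "?S \<noteq> {}" by blast
  have lb: "\<forall>d\<in>?S. int N + 1 \<le> d"
  proof
    fix d assume "d \<in> ?S"
    then obtain \<C>' where "finite \<C>'" "\<Union>\<C>' = P" "\<forall>C\<in>\<C>'. polyhedronT N C \<and> adim C \<le> d" by blast
    then show "int N + 1 \<le> d" using cover_lb[OF N2 WP] by blast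
  qed
  show ?thesis unfolding pdim_def using ne lb by (intro cInf_greatest) auto
qed

lemma pdim_Prect:
  assumes N2: "N \<ge> 2"
  shows "pdim N (Prect N) \<le> 2 * int N - 1"
proof -
  have dG: "\<forall>g\<in>Grect N. finite (dom g) \<and> dom g \<subseteq> T N"
    using Grect_props unfolding is_tpoly_def by blast
  obtain \<C> where C: "finite \<C>" "\<Union>\<C> = {w\<in>RT N. \<forall>g\<in>Grect N. lin_sat g w}"
    "\<forall>C\<in>\<C>. polyhedronT N C \<and> (\<forall>g\<in>Grect N. \<exists>b\<in>dom g. \<exists>c\<in>dom g. b \<noteq> c \<and>
        (\<forall>w\<in>C. the (g b) + w b = the (g c) + w c))"
    using decomp[OF Grect_fin dG] by blast
  let ?S = "{d. \<exists>\<C>. finite \<C> \<and> \<Union>\<C> = Prect N \<and> (\<forall>C\<in>\<C>. polyhedronT N C \<and> adim C \<le> d)}"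
  have "\<forall>C\<in>\<C>. polyhedronT N C \<and> adim C \<le> 2 * int N - 1"
  proof
    fix C assume "C \<in> \<C>"
    then have p: "polyhedronT N C" and e: "\<forall>g\<in>Grect N. \<exists>b\<in>dom g. \<exists>c\<in>dom g. b \<noteq> c \<and>
        (\<forall>w\<in>C. the (g b) + w b = the (g c) + w c)" using C(3) by auto
    have "adim C \<le> 2 * int N - 1" using piece_bound[OF poly_sub_RT[OF p] e] N2 by simp
    then show "polyhedronT N C \<and> adim C \<le> 2 * int N - 1" using p by simp
  qed
  then have mem: "2 * int N - 1 \<in> ?S" using C(1,2) unfolding Prect_def by blast
  have bdd: "bdd_below ?S"
  proof (rule bdd_belowI)
    fix d assume "d \<in> ?S"
    then obtain \<C>' where "finite \<C>'" "\<Union>\<C>' = Prect N" "\<forall>C\<in>\<C>'. polyhedronT N C \<and> adim C \<le> d" by blast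
    then show "int N + 1 \<le> d" using cover_lb[OF N2 W_Prect] by blast
  qed
  show ?thesis unfolding pdim_def by (rule cInf_lower[OF mem bdd])
qed

theorem mainTheorem4:
  fixes N :: nat
  assumes "N \<ge> 2"
  shows "int N + 1 \<le> dimW f0 N \<and> dimW f0 N \<le> 4 * int N"
proof -
  let ?D = "{pdim N P | P. trop_lin_prevariety N P \<and> W f0 N \<subseteq> P}"
  have mem: "pdim N (Prect N) \<in> ?D" using Prect_prev W_Prect by blast
  have lb: "\<forall>x\<in>?D. int N + 1 \<le> x" using pdim_lb[OF assms] by blast
  have bdd: "bdd_below ?D" using lb by (intro bdd_belowI) blast
  have "int N + 1 \<le> Inf ?D" using mem lb by (intro cInf_greatest) auto
  moreover have "Inf ?D \<le> pdim N (Prect N)" by (rule cInf_lower[OF mem bdd])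
  moreover have "pdim N (Prect N) \<le> 2 * int N - 1" using pdim_Prect[OF assms] .
  ultimately show ?thesis unfolding dimW_def by linarith
qed

end
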